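(* In the setting below, let $N=\lim_{t\to\infty}(S+tP)^{-1}$ for a signless Laplacian $P$ with graph $G$, and let $G_1,\dots,G_k$ be the connected components of $G$. For $i,j\in\{1,\dots,k\}$ let $N[i,j]$ be the submatrix of $N$ with rows indexed by the vertices of $G_i$ and columns indexed by the vertices of $G_j$. Then: (1) within each block $N[i,j]$ all entries are equal up to sign; (2) if $G_i$ is not bipartite then $N[i,j]=N[j,i]=0$ for all $j$; in particular $N=0$ if and only if no component of $G$ is bipartite; (3) if $G_i$ is bipartite with classes of sizes $p_i,q_i$ and $G_j$ is bipartite with classes of sizes $p_j,q_j$, then, ordering the vertices of each of $G_i,G_j$ so that the class of size $p$ comes first, $$N[i,j]=c_{ij}\begin{pmatrix}\mathbf{1}_{p_i}\mathbf{1}_{p_j}^\top&-\mathbf{1}_{p_i}\mathbf{1}_{q_j}^\top\\-\mathbf{1}_{q_i}\mathbf{1}_{p_j}^\top&\mathbf{1}_{q_i}\mathbf{1}_{q_j}^\top\end{pmatrix}$$ for some constant $c_{ij}\in\mathbb{R}$.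
   Context: Let $n\ge3$, $\ell>0$, $\alpha\ge(n-2)\ell$, and $S=\alpha I_n+\ell\mathbf{1}_n\mathbf{1}_n^\top$. For a real matrix $P$, $\Delta_i(P)=|P_{ii}|-\sum_{j\ne i}|P_{ij}|$. A signless Laplacian is a real symmetric $n\times n$ matrix $P$ with $P_{ij}\in\{0,1\}$ for $i\ne j$, $P_{ii}\ge 0$, and $\Delta_i(P)\in\{0,2\}$ for all $i$. Its graph $G$ has vertex set $\{1,\dots,n\}$, an edge $\{i,j\}$ ($i\ne j$) whenever $P_{ij}=1$, and a self-loop $\{i,i\}$ whenever $\Delta_i(P)=2$. A graph with a self-loop is not bipartite. The limit $N$ exists. *)

theory Defs
  imports "HOL-Analysis.Analysis"
begin

definition Delta :: "real^'n^'n \<Rightarrow> 'n \<Rightarrow> real" where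
  "Delta P i = \<bar>P$i$i\<bar> - (\<Sum>j\<in>UNIV - {i}. \<bar>P$i$j\<bar>)"

definition signless_laplacian :: "real^'n^'n \<Rightarrow> bool" where
  "signless_laplacian P \<longleftrightarrow>
     transpose P = P \<and>
     (\<forall>i j. i \<noteq> j \<longrightarrow> P$i$j = 0 \<or> P$i$j = 1) \<and>
     (\<forall>i. P$i$i \<ge> 0) \<and>
     (\<forall>i. Delta P i = 0 \<or> Delta P i = 2)"

definition adj :: "real^'n^'n \<Rightarrow> 'n \<Rightarrow> 'n \<Rightarrow> bool" where
  "adj P i j \<longleftrightarrow> i \<noteq> j \<and> P$i$j = 1"

text \<open>Self-loop at i.\<close>
definition has_loop :: "real^'n^'n \<Rightarrow> 'n \<Rightarrow> bool" where
  "has_loop P i \<longleftrightarrow> Delta P i = 2"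

definition component :: "real^'n^'n \<Rightarrow> 'n \<Rightarrow> 'n set" where
  "component P u = {v. (u, v) \<in> {(a, b). adj P a b}\<^sup>*}"

definition is_component :: "real^'n^'n \<Rightarrow> 'n set \<Rightarrow> bool" where
  "is_component P C \<longleftrightarrow> (\<exists>u. C = component P u)"

definition bipartition :: "real^'n^'n \<Rightarrow> 'n set \<Rightarrow> 'n set \<Rightarrow> 'n set \<Rightarrow> bool" where
  "bipartition P C A B \<longleftrightarrow>
     A \<union> B = C \<and> A \<inter> B = {} \<and>
     (\<forall>x\<in>C. \<not> has_loop P x) \<and>
     (\<forall>x\<in>C. \<forall>y\<in>C. adj P x y \<longrightarrow> (x \<in> A \<longleftrightarrow> y \<in> B))"

definition bipartite_on :: "real^'n^'n \<Rightarrow> 'n set \<Rightarrow> bool" where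
  "bipartite_on P C \<longleftrightarrow> (\<exists>A B. bipartition P C A B)"

definition Smat :: "real \<Rightarrow> real \<Rightarrow> real^'n^'n" where
  "Smat \<alpha> l = (\<chi> i j. (if i = j then \<alpha> else 0) + l)"

end

theory Submission
  imports Defs
begin

lemma SL_sym: "signless_laplacian (P::real^'n^'n) \<Longrightarrow> P$j$i = P$i$j"
  unfolding signless_laplacian_def by (metis transpose_def vec_lambda_beta)

lemma SL_off: "signless_laplacian (P::real^'n^'n) \<Longrightarrow> i \<noteq> j \<Longrightarrow> P$i$j = 0 \<or> P$i$j = 1"
  unfolding signless_laplacian_def by blast

lemma SL_delta: "signless_laplacian (P::real^'n^'n) \<Longrightarrow> Delta P i = 0 \<or> Delta P i = 2"
  unfolding signless_laplacian_def by blast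

lemma SL_off_nonneg: "signless_laplacian (P::real^'n^'n) \<Longrightarrow> i \<noteq> j \<Longrightarrow> P$i$j \<ge> 0"
  using SL_off by fastforce

lemma SL_diag: assumes "signless_laplacian (P::real^'n^'n)"
  shows "P$i$i = Delta P i + (\<Sum>j\<in>UNIV. if j = i then 0 else P$i$j)"
proof -
  have "P$i$i \<ge> 0" using assms unfolding signless_laplacian_def by blast
  moreover have "(\<Sum>j\<in>UNIV - {i}. \<bar>P$i$j\<bar>) = (\<Sum>j\<in>UNIV - {i}. P$i$j)"
    by (rule sum.cong) (auto intro!: abs_of_nonneg SL_off_nonneg[OF assms])
  moreover have "(\<Sum>j\<in>UNIV - {i}. P$i$j) = (\<Sum>j\<in>UNIV. if j = i then 0 else P$i$j)"
    by (simp add: sum.If_cases Diff_eq Compl_eq)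
  ultimately show ?thesis unfolding Delta_def by simp
qed

lemma quad_form:
  fixes P :: "real^'n^'n" and x :: "'n \<Rightarrow> real"
  assumes SL: "signless_laplacian P"
  shows "(\<Sum>i\<in>UNIV. x i * (\<Sum>j\<in>UNIV. P$i$j * x j)) =
    (\<Sum>i\<in>UNIV. Delta P i * (x i)^2) + (\<Sum>i\<in>UNIV. \<Sum>j\<in>UNIV. if j = i then 0 else P$i$j * (x i + x j)^2) / 2"
proof -
  define T where "T = (\<Sum>i\<in>UNIV. \<Sum>j\<in>UNIV. if j = i then 0 else P$i$j * ((x i)^2 + x i * x j))"
  have row: "x i * (\<Sum>j\<in>UNIV. P$i$j * x j) = Delta P i * (x i)^2 + (\<Sum>j\<in>UNIV. if j = i then 0 else P$i$j * ((x i)^2 + x i * x j))" for i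
  proof -
    have "(\<Sum>j\<in>UNIV. P$i$j * x j) = P$i$i * x i + (\<Sum>j\<in>UNIV. if j = i then 0 else P$i$j * x j)"
      by (simp add: sum.If_cases Diff_eq Compl_eq sum.remove[of UNIV i, simplified])
    also have "\<dots> = Delta P i * x i + (\<Sum>j\<in>UNIV. if j = i then 0 else P$i$j * x i) + (\<Sum>j\<in>UNIV. if j = i then 0 else P$i$j * x j)"
      by (subst SL_diag[OF SL]) (simp add: algebra_simps sum_distrib_left sum_distrib_right if_distrib cong: if_cong)
    finally show ?thesis
      by (simp add: algebra_simps power2_eq_square sum_distrib_left sum.distrib[symmetric] if_distrib cong: if_cong)
  qed
  have T2: "T = (\<Sum>i\<in>UNIV. \<Sum>j\<in>UNIV. if j = i then 0 else P$i$j * ((x j)^2 + x i * x j))"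
    unfolding T_def
    apply (subst sum.swap)
    apply (rule sum.cong, simp)+
    by (auto simp: SL_sym[OF SL] algebra_simps)
  have "(\<Sum>i\<in>UNIV. \<Sum>j\<in>UNIV. if j = i then 0 else P$i$j * (x i + x j)^2) = T + T"
    apply (subst T_def) apply (subst T2)
    by (simp add: sum.distrib[symmetric] power2_eq_square algebra_simps if_distrib cong: if_cong)
  moreover have "(\<Sum>i\<in>UNIV. x i * (\<Sum>j\<in>UNIV. P$i$j * x j)) = (\<Sum>i\<in>UNIV. Delta P i * (x i)^2) + T"
    unfolding T_def row by (simp add: sum.distrib)
  ultimately show ?thesis by simp
qed

lemma quad_nonneg:
  fixes P :: "real^'n^'n" and x :: "'n \<Rightarrow> real"
  assumes SL: "signless_laplacian P"
  shows "(\<Sum>i\<in>UNIV. Delta P i * (x i)^2) \<ge> 0"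
    and "(\<Sum>i\<in>UNIV. \<Sum>j\<in>UNIV. if j = i then 0 else P$i$j * (x i + x j)^2) \<ge> 0"
    and "(\<Sum>i\<in>UNIV. x i * (\<Sum>j\<in>UNIV. P$i$j * x j)) \<ge> 0"
proof -
  have d: "Delta P i \<ge> 0" for i using SL_delta[OF SL, of i] by auto
  show A: "(\<Sum>i\<in>UNIV. Delta P i * (x i)^2) \<ge> 0"
    by (intro sum_nonneg mult_nonneg_nonneg d) simp
  show B: "(\<Sum>i\<in>UNIV. \<Sum>j\<in>UNIV. if j = i then 0 else P$i$j * (x i + x j)^2) \<ge> 0"
    by (intro sum_nonneg) (auto intro!: mult_nonneg_nonneg SL_off_nonneg[OF SL])
  show "(\<Sum>i\<in>UNIV. x i * (\<Sum>j\<in>UNIV. P$i$j * x j)) \<ge> 0"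
    unfolding quad_form[OF SL] using A B by simp
qed

definition inker :: "real^'n^'n \<Rightarrow> ('n \<Rightarrow> real) \<Rightarrow> bool" where
  "inker P x \<longleftrightarrow> (\<forall>i. (\<Sum>j\<in>UNIV. P$i$j * x j) = 0)"

lemma ker_facts:
  fixes P :: "real^'n^'n" and x :: "'n \<Rightarrow> real"
  assumes SL: "signless_laplacian P" and K: "inker P x"
  shows "adj P a b \<Longrightarrow> x a + x b = 0" and "has_loop P a \<Longrightarrow> x a = 0"
proof -
  let ?A = "(\<Sum>i\<in>UNIV. Delta P i * (x i)^2)"
  let ?B = "(\<Sum>i\<in>UNIV. \<Sum>j\<in>UNIV. if j = i then 0 else P$i$j * (x i + x j)^2)"
  have "(\<Sum>i\<in>UNIV. x i * (\<Sum>j\<in>UNIV. P$i$j * x j)) = 0" using K unfolding inker_def by simp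
  hence "?A + ?B / 2 = 0" unfolding quad_form[OF SL] .
  with quad_nonneg(1,2)[OF SL, of x] have A0: "?A = 0" and B0: "?B = 0" by linarith+
  have d: "Delta P i \<ge> 0" for i using SL_delta[OF SL, of i] by auto
  have Bi: "(\<Sum>j\<in>UNIV. if j = i then 0 else P$i$j * (x i + x j)^2) \<ge> 0" for i
    by (intro sum_nonneg) (auto intro!: mult_nonneg_nonneg SL_off_nonneg[OF SL])
  from B0 have Bs: "(\<Sum>j\<in>UNIV. if j = i then 0 else P$i$j * (x i + x j)^2) = 0" for i
    using sum_nonneg_eq_0_iff[of UNIV "\<lambda>i. (\<Sum>j\<in>UNIV. if j = i then 0 else P$i$j * (x i + x j)^2)"] Bi by auto
  have Bij: "(if j = i then 0 else P$i$j * (x i + x j)^2) = 0" for i j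
  proof -
    have nn: "\<forall>j\<in>UNIV. (if j = i then 0 else P$i$j * (x i + x j)^2) \<ge> 0"
      using SL_off_nonneg[OF SL] by simp
    let ?f = "\<lambda>j. if j = i then 0 else P$i$j * (x i + x j)^2"
    have eq: "sum ?f UNIV = 0 \<longleftrightarrow> (\<forall>j\<in>UNIV. ?f j = 0)"
      by (rule sum_nonneg_eq_0_iff) (use nn in auto)
    have "\<forall>j\<in>UNIV. ?f j = 0" by (rule iffD1[OF eq Bs[of i]])
    then show ?thesis by (rule bspec) simp
  qed
  from A0 have Ai: "Delta P i * (x i)^2 = 0" for i
    using sum_nonneg_eq_0_iff[of UNIV "\<lambda>i. Delta P i * (x i)^2"] d by auto
  show "adj P a b \<Longrightarrow> x a + x b = 0"
    using Bij[of b a] unfolding adj_def by auto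
  show "has_loop P a \<Longrightarrow> x a = 0"
    using Ai[of a] unfolding has_loop_def by auto
qed

abbreviation E :: "real^'n^'n \<Rightarrow> ('n \<times> 'n) set" where
  "E P \<equiv> {(a, b). adj P a b}"

lemma adj_sym: "signless_laplacian (P::real^'n^'n) \<Longrightarrow> adj P a b \<Longrightarrow> adj P b a"
  unfolding adj_def using SL_sym by metis

lemma E_sym: "signless_laplacian (P::real^'n^'n) \<Longrightarrow> sym ((E P)\<^sup>*)"
  by (rule sym_rtrancl) (auto simp: sym_def intro: adj_sym)

lemma comp_rel:
  assumes SL: "signless_laplacian (P::real^'n^'n)" and C: "is_component P C"
    and "u \<in> C" "v \<in> C"
  shows "(u, v) \<in> (E P)\<^sup>*"
proof -
  obtain w where w: "C = component P w" using C unfolding is_component_def by blast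
  have "(w, u) \<in> (E P)\<^sup>*" "(w, v) \<in> (E P)\<^sup>*" using assms(3,4) w unfolding component_def by auto
  moreover have "(u, w) \<in> (E P)\<^sup>*" using calculation(1) E_sym[OF SL] unfolding sym_def by blast
  ultimately show ?thesis by (meson rtrancl_trans)
qed

lemma comp_closed:
  assumes C: "is_component P C" and "u \<in> C" and "(u, v) \<in> (E P)\<^sup>*"
  shows "v \<in> C"
proof -
  obtain w where w: "C = component P w" using C unfolding is_component_def by blast
  show ?thesis using assms w unfolding component_def by (auto intro: rtrancl_trans)
qed

lemma comp_self: "u \<in> component P u" "is_component P (component P u)"
  unfolding component_def is_component_def by auto

lemma ker_abs:
  assumes SL: "signless_laplacian (P::real^'n^'n)" and K: "inker P x"
    and "(u, v) \<in> (E P)\<^sup>*"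
  shows "\<bar>x v\<bar> = \<bar>x u\<bar>"
  using assms(3)
proof (induction rule: rtrancl_induct)
  case base then show ?case by simp
next
  case (step y z)
  then have "x y + x z = 0" using ker_facts(1)[OF SL K] by auto
  then show ?case using step by auto
qed

definition sg :: "'n set \<Rightarrow> 'n \<Rightarrow> real" where
  "sg A v = (if v \<in> A then 1 else -1)"

lemma sg_sq: "sg A v * sg A v = 1" unfolding sg_def by auto

lemma ker_bip:
  assumes SL: "signless_laplacian (P::real^'n^'n)" and K: "inker P x"
    and C: "is_component P C" and BP: "bipartition P C A B"
    and u: "u \<in> C" and uv: "(u, v) \<in> (E P)\<^sup>*"
  shows "x v * sg A v = x u * sg A u"
  using uv
proof (induction rule: rtrancl_induct)
  case base then show ?case by simp
next
  case (step y z)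
  have yC: "y \<in> C" using comp_closed[OF C u step(1)] .
  have zC: "z \<in> C" using comp_closed[OF C yC] step(2) by auto
  have adj: "adj P y z" using step(2) by auto
  have "x y + x z = 0" using ker_facts(1)[OF SL K adj] .
  moreover have "y \<in> A \<longleftrightarrow> z \<in> B" using BP yC zC adj unfolding bipartition_def by blast
  moreover have "z \<in> A \<longleftrightarrow> z \<notin> B" using BP zC unfolding bipartition_def by blast
  moreover have "y \<in> A \<longleftrightarrow> y \<notin> B" using BP yC unfolding bipartition_def by blast
  ultimately have "x z * sg A z = x y * sg A y" unfolding sg_def by auto
  then show ?case using step(3) by simp
qed

lemma ker_nonbip:
  assumes SL: "signless_laplacian (P::real^'n^'n)" and K: "inker P x"
    and C: "is_component P C" and NB: "\<not> bipartite_on P C" and u: "u \<in> C"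
  shows "x u = 0"
proof (rule ccontr)
  assume nz: "x u \<noteq> 0"
  define A where "A = {v\<in>C. x v = x u}"
  define B where "B = {v\<in>C. x v = - x u}"
  have ab: "\<bar>x v\<bar> = \<bar>x u\<bar>" if "v \<in> C" for v
    using ker_abs[OF SL K comp_rel[OF SL C u that]] .
  have "bipartition P C A B"
    unfolding bipartition_def
  proof (intro conjI ballI impI)
    show "A \<union> B = C" unfolding A_def B_def using ab by (auto simp: abs_eq_iff)
    show "A \<inter> B = {}" unfolding A_def B_def using nz by auto
    fix v assume v: "v \<in> C"
    show "\<not> has_loop P v"
    proof
      assume "has_loop P v"
      then have "x v = 0" using ker_facts(2)[OF SL K] by auto
      then show False using ab[OF v] nz by auto
    qed
    fix y assume y: "y \<in> C" and adj: "adj P v y"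
    have "x v + x y = 0" using ker_facts(1)[OF SL K adj] .
    then show "v \<in> A \<longleftrightarrow> y \<in> B" unfolding A_def B_def using v y by auto
  qed
  then show False using NB unfolding bipartite_on_def by blast
qed

lemma Smat_entry: "(Smat \<alpha> l + t *\<^sub>R P)$i$k = (if i = k then \<alpha> else 0) + l + t * (P::real^'n^'n)$i$k"
  by (simp add: Smat_def)

lemma S_quad: fixes y :: "'n::finite \<Rightarrow> real" and \<alpha> l :: real shows "(\<Sum>i\<in>UNIV. y i * (\<Sum>j\<in>UNIV. ((if i = j then \<alpha> else 0) + l) * y j))
   = \<alpha> * (\<Sum>i\<in>UNIV. (y i)^2) + l * (\<Sum>i\<in>UNIV. y i)^2"
proof -
  have "(\<Sum>j\<in>UNIV. ((if i = j then \<alpha> else 0) + l) * y j) = \<alpha> * y i + l * (\<Sum>j\<in>UNIV. y j)" for i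
  proof -
    have "(\<Sum>j\<in>UNIV. ((if i = j then \<alpha> else 0) + l) * y j) = (\<Sum>j\<in>UNIV. (if i = j then \<alpha> * y j else 0) + l * y j)"
      by (rule sum.cong) (simp_all add: distrib_right)
    also have "\<dots> = \<alpha> * y i + l * (\<Sum>j\<in>UNIV. y j)"
      by (simp add: sum.distrib sum_distrib_left algebra_simps)
    finally show ?thesis .
  qed
  then show ?thesis
    by (simp add: algebra_simps sum.distrib sum_distrib_left sum_distrib_right power2_eq_square)
qed

lemma inv_ok:
  fixes P :: "real^'n^'n"
  assumes SL: "signless_laplacian P" and a: "\<alpha> > 0" and l: "l \<ge> 0" and t: "t \<ge> 0"
  shows "invertible (Smat \<alpha> l + t *\<^sub>R P)"
  unfolding invertible_left_inverse matrix_left_invertible_ker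
proof (intro allI impI)
  fix y :: "real^'n" assume y: "(Smat \<alpha> l + t *\<^sub>R P) *v y = 0"
  let ?y = "\<lambda>i. y$i"
  have row: "(\<Sum>j\<in>UNIV. ((if i = j then \<alpha> else 0) + l) * ?y j) + t * (\<Sum>j\<in>UNIV. P$i$j * ?y j) = 0" for i
  proof -
    have "((Smat \<alpha> l + t *\<^sub>R P) *v y)$i = 0" using y by simp
    then show ?thesis unfolding matrix_vector_mult_def Smat_entry
      by (simp add: algebra_simps sum.distrib sum_distrib_left)
  qed
  have "(\<Sum>i\<in>UNIV. ?y i * ((\<Sum>j\<in>UNIV. ((if i = j then \<alpha> else 0) + l) * ?y j) + t * (\<Sum>j\<in>UNIV. P$i$j * ?y j))) = 0"
    using row by simp
  then have "\<alpha> * (\<Sum>i\<in>UNIV. (?y i)^2) + l * (\<Sum>i\<in>UNIV. ?y i)^2 + t * (\<Sum>i\<in>UNIV. ?y i * (\<Sum>j\<in>UNIV. P$i$j * ?y j)) = 0"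
    unfolding S_quad[symmetric] by (simp add: algebra_simps sum.distrib sum_distrib_left)
  moreover have "(\<Sum>i\<in>UNIV. ?y i * (\<Sum>j\<in>UNIV. P$i$j * ?y j)) \<ge> 0" using quad_nonneg(3)[OF SL] .
  moreover have "(\<Sum>i\<in>UNIV. (?y i)^2) \<ge> 0" by (intro sum_nonneg) simp
  ultimately have "\<alpha> * (\<Sum>i\<in>UNIV. (?y i)^2) \<le> 0" using l t
    by (smt (verit) mult_nonneg_nonneg zero_le_power2)
  then have "(\<Sum>i\<in>UNIV. (?y i)^2) = 0" using a \<open>(\<Sum>i\<in>UNIV. (?y i)^2) \<ge> 0\<close>
    by (smt (verit) mult_pos_pos)
  then have "\<forall>i\<in>UNIV. (?y i)^2 = 0" using sum_nonneg_eq_0_iff[of UNIV "\<lambda>i. (?y i)^2"] by simp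
  then show "y = 0" by (simp add: vec_eq_iff)
qed

lemma inv_eqs:
  assumes "invertible (M::real^'n^'n)"
  shows "M ** matrix_inv M = mat 1" "matrix_inv M ** M = mat 1"
proof -
  have "\<exists>A'. M ** A' = mat 1 \<and> A' ** M = mat 1" using assms unfolding invertible_def .
  from someI_ex[OF this] show "M ** matrix_inv M = mat 1" "matrix_inv M ** M = mat 1"
    unfolding matrix_inv_def by auto
qed

lemma lim_zero_right:
  fixes R :: "real \<Rightarrow> real^'n^'n" and S P N :: "real^'n^'n"
  assumes lim: "(R \<longlongrightarrow> N) at_top"
    and id: "\<And>t. t > 0 \<Longrightarrow> (\<Sum>k\<in>UNIV. (S$i$k + t * P$i$k) * R t$k$j) = c"
  shows "(\<Sum>k\<in>UNIV. P$i$k * N$k$j) = 0"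
proof -
  have ent: "((\<lambda>t. R t $k$j) \<longlongrightarrow> N$k$j) at_top" for k j
    using tendsto_vec_nth[OF tendsto_vec_nth[OF lim]] .
  have lim1: "((\<lambda>t. \<Sum>k\<in>UNIV. P$i$k * R t$k$j) \<longlongrightarrow> (\<Sum>k\<in>UNIV. P$i$k * N$k$j)) at_top"
    by (intro tendsto_intros ent)
  have "((\<lambda>t. c - (\<Sum>k\<in>UNIV. S$i$k * R t$k$j)) \<longlongrightarrow> c - (\<Sum>k\<in>UNIV. S$i$k * N$k$j)) at_top"
    by (intro tendsto_intros ent)
  then have lim2: "((\<lambda>t. (c - (\<Sum>k\<in>UNIV. S$i$k * R t$k$j)) / t) \<longlongrightarrow> 0) at_top"
    by (rule tendsto_divide_0) (rule filterlim_at_top_imp_at_infinity[OF filterlim_ident])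
  have ev: "eventually (\<lambda>t. (c - (\<Sum>k\<in>UNIV. S$i$k * R t$k$j)) / t = (\<Sum>k\<in>UNIV. P$i$k * R t$k$j)) at_top"
    unfolding eventually_at_top_linorder
  proof (intro exI allI impI)
    fix t :: real assume "t \<ge> 1"
    then have tp: "t > 0" by simp
    have "(\<Sum>k\<in>UNIV. S$i$k * R t$k$j) + t * (\<Sum>k\<in>UNIV. P$i$k * R t$k$j) = c"
      using id[OF tp] by (simp add: algebra_simps sum.distrib sum_distrib_left)
    then show "(c - (\<Sum>k\<in>UNIV. S$i$k * R t$k$j)) / t = (\<Sum>k\<in>UNIV. P$i$k * R t$k$j)"
      using tp by (simp add: field_simps)
  qed
  have "((\<lambda>t. \<Sum>k\<in>UNIV. P$i$k * R t$k$j) \<longlongrightarrow> 0) at_top"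
    using Lim_transform_eventually[OF lim2 ev] .
  then show ?thesis using tendsto_unique[OF _ lim1] by simp
qed

lemma lim_zero_left:
  fixes R :: "real \<Rightarrow> real^'n^'n" and S P N :: "real^'n^'n"
  assumes lim: "(R \<longlongrightarrow> N) at_top"
    and id: "\<And>t. t > 0 \<Longrightarrow> (\<Sum>k\<in>UNIV. R t$i$k * (S$k$j + t * P$k$j)) = c"
  shows "(\<Sum>k\<in>UNIV. N$i$k * P$k$j) = 0"
proof -
  have ent: "((\<lambda>t. R t $i$k) \<longlongrightarrow> N$i$k) at_top" for k
    using tendsto_vec_nth[OF tendsto_vec_nth[OF lim]] .
  have lim1: "((\<lambda>t. \<Sum>k\<in>UNIV. R t$i$k * P$k$j) \<longlongrightarrow> (\<Sum>k\<in>UNIV. N$i$k * P$k$j)) at_top"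
    by (intro tendsto_intros ent)
  have "((\<lambda>t. c - (\<Sum>k\<in>UNIV. R t$i$k * S$k$j)) \<longlongrightarrow> c - (\<Sum>k\<in>UNIV. N$i$k * S$k$j)) at_top"
    by (intro tendsto_intros ent)
  then have lim2: "((\<lambda>t. (c - (\<Sum>k\<in>UNIV. R t$i$k * S$k$j)) / t) \<longlongrightarrow> 0) at_top"
    by (rule tendsto_divide_0) (rule filterlim_at_top_imp_at_infinity[OF filterlim_ident])
  have ev: "eventually (\<lambda>t. (c - (\<Sum>k\<in>UNIV. R t$i$k * S$k$j)) / t = (\<Sum>k\<in>UNIV. R t$i$k * P$k$j)) at_top"
    unfolding eventually_at_top_linorder
  proof (intro exI allI impI)
    fix t :: real assume "t \<ge> 1"
    then have tp: "t > 0" by simp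
    have "(\<Sum>k\<in>UNIV. R t$i$k * S$k$j) + t * (\<Sum>k\<in>UNIV. R t$i$k * P$k$j) = c"
      using id[OF tp] by (simp add: algebra_simps sum.distrib sum_distrib_left)
    then show "(c - (\<Sum>k\<in>UNIV. R t$i$k * S$k$j)) / t = (\<Sum>k\<in>UNIV. R t$i$k * P$k$j)"
      using tp by (simp add: field_simps)
  qed
  have "((\<lambda>t. \<Sum>k\<in>UNIV. R t$i$k * P$k$j) \<longlongrightarrow> 0) at_top"
    using Lim_transform_eventually[OF lim2 ev] .
  then show ?thesis using tendsto_unique[OF _ lim1] by simp
qed

lemma row_split: "(\<Sum>j\<in>UNIV. f j) = f i + (\<Sum>j\<in>UNIV. if j = i then 0 else f j)"
  for f :: "'n::finite \<Rightarrow> real"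
  by (simp add: sum.If_cases Diff_eq Compl_eq sum.remove[of UNIV i, simplified])

lemma bip_ker:
  fixes P :: "real^'n^'n"
  assumes SL: "signless_laplacian P" and C: "is_component P C" and BP: "bipartition P C A B"
  shows "inker P (\<lambda>v. if v \<in> C then sg A v else 0)"
  unfolding inker_def
proof
  fix i
  let ?x = "\<lambda>v. if v \<in> C then sg A v else 0"
  have spl: "(\<Sum>j\<in>UNIV. P$i$j * ?x j) = P$i$i * ?x i + (\<Sum>j\<in>UNIV. if j = i then 0 else P$i$j * ?x j)"
    by (rule row_split)
  show "(\<Sum>j\<in>UNIV. P$i$j * ?x j) = 0"
  proof (cases "i \<in> C")
    case False
    have "(if j = i then 0 else P$i$j * ?x j) = 0" for j
    proof (cases "j = i \<or> j \<notin> C")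
      case True then show ?thesis by auto
    next
      case False
      then have j: "j \<noteq> i" "j \<in> C" by auto
      have "P$i$j = 0"
      proof (rule ccontr)
        assume "P$i$j \<noteq> 0"
        then have "P$i$j = 1" using SL_off[OF SL, of i j] j by auto
        then have "adj P j i" using j SL_sym[OF SL, of i j] unfolding adj_def by auto
        then have "i \<in> C" using comp_closed[OF C j(2), of i] by auto
        then show False using \<open>i \<notin> C\<close> by simp
      qed
      then show ?thesis by simp
    qed
    then show ?thesis unfolding spl using False by simp
  next
    case True
    have nl: "\<not> has_loop P i" using BP True unfolding bipartition_def by blast
    then have d0: "Delta P i = 0" using SL_delta[OF SL, of i] unfolding has_loop_def by auto
    have termeq: "(if j = i then 0 else P$i$j * ?x j) = - sg A i * (if j = i then 0 else P$i$j)" for j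
    proof (cases "j = i")
      case True then show ?thesis by simp
    next
      case False
      show ?thesis
      proof (cases "P$i$j = 0")
        case True then show ?thesis by simp
      next
        case nz: False
        then have "P$i$j = 1" using SL_off[OF SL, of i j] False by auto
        then have adj: "adj P i j" using False unfolding adj_def by auto
        then have jC: "j \<in> C" using comp_closed[OF C True, of j] by auto
        have "i \<in> A \<longleftrightarrow> j \<in> B" using BP True jC adj unfolding bipartition_def by blast
        moreover have "j \<in> A \<longleftrightarrow> j \<notin> B" using BP jC unfolding bipartition_def by blast
        ultimately have "sg A j = - sg A i" unfolding sg_def by auto
        then show ?thesis using False jC \<open>P$i$j = 1\<close> by simp
      qed
    qed
    have "(\<Sum>j\<in>UNIV. if j = i then 0 else P$i$j * ?x j) = - sg A i * (\<Sum>j\<in>UNIV. if j = i then 0 else P$i$j)"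
      unfolding termeq by (simp add: sum_distrib_left)
    moreover have "P$i$i = (\<Sum>j\<in>UNIV. if j = i then 0 else P$i$j)" using SL_diag[OF SL, of i] d0 by simp
    ultimately show ?thesis unfolding spl using True by simp
  qed
qed

lemma left_kernel_id:
  fixes S P R :: "real^'n^'n" and x :: "'n \<Rightarrow> real"
  assumes id: "\<And>i. (\<Sum>k\<in>UNIV. (S$i$k + t * P$i$k) * R$k$j) = (if i = j then 1 else 0)"
    and K: "\<And>k. (\<Sum>i\<in>UNIV. x i * P$i$k) = 0"
  shows "(\<Sum>k\<in>UNIV. (\<Sum>i\<in>UNIV. x i * S$i$k) * R$k$j) = x j"
proof -
  have "(\<Sum>i\<in>UNIV. x i * (\<Sum>k\<in>UNIV. (S$i$k + t * P$i$k) * R$k$j)) = x j"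
    unfolding id by (simp add: if_distrib cong: if_cong)
  moreover have "(\<Sum>i\<in>UNIV. x i * (\<Sum>k\<in>UNIV. (S$i$k + t * P$i$k) * R$k$j))
     = (\<Sum>i\<in>UNIV. \<Sum>k\<in>UNIV. x i * S$i$k * R$k$j) + t * (\<Sum>i\<in>UNIV. \<Sum>k\<in>UNIV. x i * P$i$k * R$k$j)"
    by (simp add: algebra_simps sum.distrib sum_distrib_left)
  moreover have "(\<Sum>i\<in>UNIV. \<Sum>k\<in>UNIV. x i * S$i$k * R$k$j) = (\<Sum>k\<in>UNIV. \<Sum>i\<in>UNIV. x i * S$i$k * R$k$j)"
    by (rule sum.swap)
  moreover have "(\<Sum>i\<in>UNIV. \<Sum>k\<in>UNIV. x i * P$i$k * R$k$j) = (\<Sum>k\<in>UNIV. \<Sum>i\<in>UNIV. x i * P$i$k * R$k$j)"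
    by (rule sum.swap)
  moreover have "(\<Sum>k\<in>UNIV. \<Sum>i\<in>UNIV. x i * P$i$k * R$k$j) = (\<Sum>k\<in>UNIV. (\<Sum>i\<in>UNIV. x i * P$i$k) * R$k$j)"
    by (simp add: sum_distrib_right)
  moreover have "(\<Sum>k\<in>UNIV. \<Sum>i\<in>UNIV. x i * S$i$k * R$k$j) = (\<Sum>k\<in>UNIV. (\<Sum>i\<in>UNIV. x i * S$i$k) * R$k$j)"
    by (simp add: sum_distrib_right)
  ultimately show ?thesis using K by simp
qed

theorem corollary4p4:
  fixes P N :: "real^'n^'n" and \<alpha> l :: real
  assumes n3: "CARD('n) \<ge> 3"
    and l_pos: "l > 0"
    and alpha: "\<alpha> \<ge> (real CARD('n) - 2) * l"
    and SL: "signless_laplacian P"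
    and lim: "((\<lambda>t. matrix_inv (Smat \<alpha> l + t *\<^sub>R P)) \<longlongrightarrow> N) at_top"
  shows
    "(\<forall>Ci Cj. is_component P Ci \<longrightarrow> is_component P Cj \<longrightarrow>
        (\<forall>u\<in>Ci. \<forall>u'\<in>Ci. \<forall>v\<in>Cj. \<forall>v'\<in>Cj. \<bar>N$u$v\<bar> = \<bar>N$u'$v'\<bar>))
     \<and> (\<forall>Ci. is_component P Ci \<longrightarrow> \<not> bipartite_on P Ci \<longrightarrow>
        (\<forall>u\<in>Ci. \<forall>v. N$u$v = 0 \<and> N$v$u = 0))
     \<and> (N = 0 \<longleftrightarrow> (\<forall>C. is_component P C \<longrightarrow> \<not> bipartite_on P C))
     \<and> (\<forall>Ci Cj Ai Bi Aj Bj. is_component P Ci \<longrightarrow> is_component P Cj \<longrightarrow>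
        bipartition P Ci Ai Bi \<longrightarrow> bipartition P Cj Aj Bj \<longrightarrow>
        (\<exists>c::real. \<forall>u\<in>Ci. \<forall>v\<in>Cj.
            N$u$v = c * (if u \<in> Ai then 1 else -1) * (if v \<in> Aj then 1 else -1)))"
proof -
  define R where "R t = matrix_inv (Smat \<alpha> l + t *\<^sub>R P)" for t
  have lim': "(R \<longlongrightarrow> N) at_top" using lim unfolding R_def .
  have "real CARD('n) - 2 \<ge> 1" using n3 by simp
  then have "(real CARD('n) - 2) * l \<ge> l" using l_pos by simp
  then have apos: "\<alpha> > 0" using alpha l_pos by linarith
  have inv: "invertible (Smat \<alpha> l + t *\<^sub>R P)" if "t > 0" for t
    using inv_ok[OF SL apos _ ] l_pos that by simp
  have idR: "(\<Sum>k\<in>UNIV. ((Smat \<alpha> l)$i$k + t * P$i$k) * R t$k$j) = (if i = j then 1 else 0)"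
    if "t > 0" for t i j
  proof -
    have "((Smat \<alpha> l + t *\<^sub>R P) ** R t)$i$j = (mat 1 :: real^'n^'n)$i$j"
      using inv_eqs(1)[OF inv[OF that]] unfolding R_def by simp
    then show ?thesis by (simp add: matrix_matrix_mult_def mat_def)
  qed
  have idL: "(\<Sum>k\<in>UNIV. R t$i$k * ((Smat \<alpha> l)$k$j + t * P$k$j)) = (if i = j then 1 else 0)"
    if "t > 0" for t i j
  proof -
    have "(R t ** (Smat \<alpha> l + t *\<^sub>R P))$i$j = (mat 1 :: real^'n^'n)$i$j"
      using inv_eqs(2)[OF inv[OF that]] unfolding R_def by simp
    then show ?thesis by (simp add: matrix_matrix_mult_def mat_def)
  qed
  have PN: "(\<Sum>k\<in>UNIV. P$i$k * N$k$j) = 0" for i j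
    by (rule lim_zero_right[OF lim' idR])
  have NP: "(\<Sum>k\<in>UNIV. N$i$k * P$k$j) = 0" for i j
    by (rule lim_zero_left[OF lim' idL])
  have col: "inker P (\<lambda>k. N$k$v)" for v
    unfolding inker_def using PN by simp
  have row: "inker P (\<lambda>k. N$u$k)" for u
    unfolding inker_def
  proof
    fix i
    have "(\<Sum>j\<in>UNIV. P$i$j * N$u$j) = (\<Sum>j\<in>UNIV. N$u$j * P$j$i)"
      by (rule sum.cong) (auto simp: SL_sym[OF SL])
    then show "(\<Sum>j\<in>UNIV. P$i$j * N$u$j) = 0" using NP by simp
  qed
  have P1: "\<forall>Ci Cj. is_component P Ci \<longrightarrow> is_component P Cj \<longrightarrow>
        (\<forall>u\<in>Ci. \<forall>u'\<in>Ci. \<forall>v\<in>Cj. \<forall>v'\<in>Cj. \<bar>N$u$v\<bar> = \<bar>N$u'$v'\<bar>)"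
  proof (intro allI impI ballI)
    fix Ci Cj u u' v v' assume Ci: "is_component P Ci" and Cj: "is_component P Cj"
      and u: "u \<in> Ci" and u': "u' \<in> Ci" and v: "v \<in> Cj" and v': "v' \<in> Cj"
    have "\<bar>N$u'$v\<bar> = \<bar>N$u$v\<bar>"
      using ker_abs[OF SL col comp_rel[OF SL Ci u u']] .
    moreover have "\<bar>N$u'$v'\<bar> = \<bar>N$u'$v\<bar>"
      using ker_abs[OF SL row comp_rel[OF SL Cj v v']] .
    ultimately show "\<bar>N$u$v\<bar> = \<bar>N$u'$v'\<bar>" by simp
  qed
  have P2: "\<forall>Ci. is_component P Ci \<longrightarrow> \<not> bipartite_on P Ci \<longrightarrow>
        (\<forall>u\<in>Ci. \<forall>v. N$u$v = 0 \<and> N$v$u = 0)"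
  proof (intro allI impI ballI conjI)
    fix Ci u v assume Ci: "is_component P Ci" and nb: "\<not> bipartite_on P Ci" and u: "u \<in> Ci"
    show "N$u$v = 0" using ker_nonbip[OF SL col Ci nb u] by simp
    show "N$v$u = 0" using ker_nonbip[OF SL row Ci nb u] by simp
  qed
  have P3: "N = 0 \<longleftrightarrow> (\<forall>C. is_component P C \<longrightarrow> \<not> bipartite_on P C)"
  proof
    assume N0: "N = 0"
    show "\<forall>C. is_component P C \<longrightarrow> \<not> bipartite_on P C"
    proof (intro allI impI notI)
      fix C assume C: "is_component P C" and "bipartite_on P C"
      then obtain A B where BP: "bipartition P C A B" unfolding bipartite_on_def by blast
      obtain w where w: "C = component P w" using C unfolding is_component_def by blast
      have wC: "w \<in> C" using w comp_self by simp
      define x where "x v = (if v \<in> C then sg A v else 0)" for v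
      have K: "inker P x" unfolding x_def by (rule bip_ker[OF SL C BP])
      have Kl: "(\<Sum>i\<in>UNIV. x i * P$i$k) = 0" for k
      proof -
        have "(\<Sum>i\<in>UNIV. x i * P$i$k) = (\<Sum>i\<in>UNIV. P$k$i * x i)"
          by (rule sum.cong) (auto simp: SL_sym[OF SL])
        then show ?thesis using K unfolding inker_def by simp
      qed
      define c where "c k = (\<Sum>i\<in>UNIV. x i * (Smat \<alpha> l)$i$k)" for k
      have ev: "eventually (\<lambda>t. x w = (\<Sum>k\<in>UNIV. c k * R t$k$w)) at_top"
        unfolding eventually_at_top_linorder
      proof (intro exI allI impI)
        fix t :: real assume "t \<ge> 1"
        then have tp: "t > 0" by simp
        show "x w = (\<Sum>k\<in>UNIV. c k * R t$k$w)"
          unfolding c_def by (rule left_kernel_id[OF idR[OF tp] Kl, symmetric])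
      qed
      have ent: "((\<lambda>t. R t $k$w) \<longlongrightarrow> N$k$w) at_top" for k
        using tendsto_vec_nth[OF tendsto_vec_nth[OF lim']] .
      have l1: "((\<lambda>t. \<Sum>k\<in>UNIV. c k * R t$k$w) \<longlongrightarrow> (\<Sum>k\<in>UNIV. c k * N$k$w)) at_top"
        by (intro tendsto_intros ent)
      have "((\<lambda>t. \<Sum>k\<in>UNIV. c k * R t$k$w) \<longlongrightarrow> x w) at_top"
        by (rule Lim_transform_eventually[OF tendsto_const ev])
      then have "x w = (\<Sum>k\<in>UNIV. c k * N$k$w)" using tendsto_unique[OF _ _ l1] by simp
      also have "\<dots> = 0" using N0 by simp
      finally show False using wC unfolding x_def sg_def by (auto split: if_splits)
    qed
  next
    assume H: "\<forall>C. is_component P C \<longrightarrow> \<not> bipartite_on P C"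
    show "N = 0"
    proof (simp add: vec_eq_iff, intro allI)
      fix u v
      show "N$u$v = 0" using P2 H comp_self[where P=P and u=u] by blast
    qed
  qed
  have P4: "\<forall>Ci Cj Ai Bi Aj Bj. is_component P Ci \<longrightarrow> is_component P Cj \<longrightarrow>
        bipartition P Ci Ai Bi \<longrightarrow> bipartition P Cj Aj Bj \<longrightarrow>
        (\<exists>c::real. \<forall>u\<in>Ci. \<forall>v\<in>Cj.
            N$u$v = c * (if u \<in> Ai then 1 else -1) * (if v \<in> Aj then 1 else -1))"
  proof (intro allI impI)
    fix Ci Cj Ai Bi Aj Bj
    assume Ci: "is_component P Ci" and Cj: "is_component P Cj"
      and Bi: "bipartition P Ci Ai Bi" and Bj: "bipartition P Cj Aj Bj"
    obtain u0 where u0: "Ci = component P u0" using Ci unfolding is_component_def by blast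
    obtain v0 where v0: "Cj = component P v0" using Cj unfolding is_component_def by blast
    have u0C: "u0 \<in> Ci" using u0 comp_self by simp
    have v0C: "v0 \<in> Cj" using v0 comp_self by simp
    show "\<exists>c::real. \<forall>u\<in>Ci. \<forall>v\<in>Cj.
            N$u$v = c * (if u \<in> Ai then 1 else -1) * (if v \<in> Aj then 1 else -1)"
    proof (intro exI ballI)
      fix u v assume u: "u \<in> Ci" and v: "v \<in> Cj"
      have e1: "N$u$v * sg Ai u = N$u0$v * sg Ai u0"
        using ker_bip[OF SL col Ci Bi u0C comp_rel[OF SL Ci u0C u]] .
      have e2: "N$u0$v * sg Aj v = N$u0$v0 * sg Aj v0"
        using ker_bip[OF SL row Cj Bj v0C comp_rel[OF SL Cj v0C v]] .
      have "N$u$v = (N$u$v * sg Ai u) * sg Ai u * (sg Aj v * sg Aj v)"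
        using sg_sq[of Ai u] sg_sq[of Aj v] by (simp add: algebra_simps)
      also have "\<dots> = (N$u0$v * sg Aj v) * sg Ai u0 * sg Ai u * sg Aj v"
        unfolding e1 by (simp add: algebra_simps)
      also have "\<dots> = (N$u0$v0 * sg Aj v0 * sg Ai u0) * sg Ai u * sg Aj v"
        unfolding e2 by (simp add: algebra_simps)
      finally show "N$u$v = (N$u0$v0 * sg Aj v0 * sg Ai u0) * (if u \<in> Ai then 1 else -1) * (if v \<in> Aj then 1 else -1)"
        unfolding sg_def .
    qed
  qed
  show ?thesis using P1 P2 P3 P4 by blast
qed

end
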